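(* Let $\mathcal C$ be an EACP over $\mathbb R$ with natural basis $\{h_1,\dots,h_n,r\}$ and matrix of structural constants $M=A\oplus\mathbf b$, and suppose $\operatorname{rank}A=n$. Then every evolution subalgebra $\mathcal C_1$ of $\mathcal C$ is of the form $\mathcal C_1=\operatorname{span}\{f_1,\dots,f_m,ar\}$ for some $0\le m\le n$, $a\in\{0,1\}$ and vectors $f_i=\sum_{j=1}^n\alpha_{ij}h_j$ with $\alpha_{ij}\in\mathbb R$, $i=1,\dots,m$.
   Context: An EACP over a field $K$ is a $K$-algebra with a basis $\{h_1,\dots,h_n,r\}$ (natural basis) such that $h_ir=rh_i=\sum_{j=1}^n a_{ij}h_j+b_ir$, $h_ih_j=0$ for all $i,j$, and $rr=0$; its matrix of structural constants is $M=A\oplus\mathbf b$ with $A=(a_{ij})_{i,j=1}^n$, $\mathbf b=(b_1,\dots,b_n)^T$. An evolution subalgebra of $\mathcal C$ is a linear subspace $\mathcal C_1$ which itself has a basis $\{h'_1,\dots,h'_k,r'\}$ with a multiplication table of the same form, i.e. $h'_ih'_j=0$, $r'r'=0$, and $h'_ir'=r'h'_i=\sum_j a'_{ij}h'_j+b'_ir'$ for some scalars $a'_{ij},b'_i$. *)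

theory Defs
  imports "HOL-Analysis.Analysis"
begin

text \<open>An element
  \<open>\<Sum>j x_j h_j + s r\<close> is represented by the pair (x, s) in real^'n times real.
  The index type 'n has n = CARD('n) elements.\<close>

definition eacp_h :: "'n::finite \<Rightarrow> (real^'n) \<times> real" where
  "eacp_h j = (axis j 1, 0)"

definition eacp_r :: "(real^'n::finite) \<times> real" where
  "eacp_r = (0, 1)"

text \<open>Multiplication, extended bilinearly from the table
  h_i h_j = 0, r r = 0, h_i r = r h_i = \<Sum>j a_ij h_j + b_i r.
  Here A $ i $ j = a_ij and b $ i = b_i.\<close>

definition eacp_mult :: "real^'n^'n \<Rightarrow> real^'n \<Rightarrow>
    (real^'n::finite) \<times> real \<Rightarrow> (real^'n) \<times> real \<Rightarrow> (real^'n) \<times> real" where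
  "eacp_mult A b u v =
     (\<Sum>i\<in>UNIV. (fst u $ i * snd v + snd u * fst v $ i) *\<^sub>R
                  ((\<Sum>j\<in>UNIV. A $ i $ j *\<^sub>R eacp_h j) + b $ i *\<^sub>R eacp_r))"

definition evolution_subalgebra ::
    "real^'n^'n \<Rightarrow> real^'n \<Rightarrow> ((real^'n::finite) \<times> real) set \<Rightarrow> bool" where
  "evolution_subalgebra A b S \<longleftrightarrow> subspace S \<and>
     (\<exists>hs r'. distinct (r' # hs) \<and> independent (set (r' # hs)) \<and>
              span (set (r' # hs)) = S \<and>
              (\<forall>h\<in>set hs. \<forall>h'\<in>set hs. eacp_mult A b h h' = 0) \<and>
              eacp_mult A b r' r' = 0 \<and>
              (\<forall>h\<in>set hs. \<exists>a' b'. eacp_mult A b h r' = eacp_mult A b r' h \<and>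
                   eacp_mult A b h r' = (\<Sum>j<length hs. a' j *\<^sub>R hs ! j) + b' *\<^sub>R r'))"

end

theory Submission
  imports Defs
begin

lemma fst_mult: "fst (eacp_mult A b u v) $ j = (\<Sum>i\<in>UNIV. (fst u $ i * snd v + snd u * fst v $ i) * A$i$j)"
  unfolding eacp_mult_def eacp_h_def eacp_r_def
  by (simp add: fst_sum sum_component axis_def fst_scaleR if_distrib cong: if_cong)
lemma sq_split:
  fixes A :: "real^'n::finite^'n"
  assumes "rank A = CARD('n)" "eacp_mult A b u u = 0"
  shows "fst u = 0 \<or> snd u = 0"
proof (rule ccontr)
  assume c: "\<not> (fst u = 0 \<or> snd u = 0)"
  have "transpose A *v fst u = 0"
  proof (subst vec_eq_iff, intro allI)
    fix j
    have "fst (eacp_mult A b u u) $ j = 0" using assms(2) by simp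
    hence "(\<Sum>i\<in>UNIV. (2 * snd u) * (fst u $ i * A$i$j)) = 0"
      unfolding fst_mult by (simp add: algebra_simps)
    hence "(2 * snd u) * (\<Sum>i\<in>UNIV. fst u $ i * A$i$j) = 0" by (simp add: sum_distrib_left)
    hence "(\<Sum>i\<in>UNIV. fst u $ i * A$i$j) = 0" using c by simp
    thus "(transpose A *v fst u) $ j = 0 $ j"
      by (simp add: matrix_vector_mult_def transpose_def mult.commute)
  qed
  moreover have "rank (transpose A) = CARD('n)" using assms(1) by (simp add: rank_transpose)
  ultimately show False using c matrix_nonfull_linear_equations_eq by metis
qed

theorem proposition4p4:
  fixes A :: "real^'n::finite^'n" and b :: "real^'n"
    and S :: "((real^'n) \<times> real) set"
  assumes "rank A = CARD('n)"
    and "evolution_subalgebra A b S"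
  shows "\<exists>m::nat. \<exists>a::real. \<exists>\<alpha>::nat \<Rightarrow> 'n \<Rightarrow> real.
           m \<le> CARD('n) \<and> a \<in> {0, 1} \<and>
           S = span ((\<lambda>i. \<Sum>j\<in>UNIV. \<alpha> i j *\<^sub>R eacp_h j) ` {1..m} \<union> {a *\<^sub>R eacp_r})"
proof -
  obtain hs r' where d: "distinct (r' # hs)" and ind: "independent (set (r' # hs))"
    and sp: "span (set (r' # hs)) = S"
    and hh: "\<forall>h\<in>set hs. \<forall>h'\<in>set hs. eacp_mult A b h h' = 0"
    and rr: "eacp_mult A b r' r' = 0"
    using assms(2) unfolding evolution_subalgebra_def by blast
  define B where "B = set (r' # hs)"
  have split: "fst u = 0 \<or> snd u = 0" if "u \<in> B" for u
  proof -
    have "eacp_mult A b u u = 0" using that hh rr unfolding B_def by auto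
    thus ?thesis by (rule sq_split[OF assms(1)])
  qed
  define L where "L = filter (\<lambda>u. snd u = 0) (r' # hs)"
  define m where "m = length L"
  define \<alpha> where "\<alpha> = (\<lambda>i j. fst (L ! (i - 1)) $ j)"
  define a :: real where "a = (if \<exists>u\<in>B. snd u \<noteq> 0 then 1 else 0)"
  have LB: "set L \<subseteq> B" unfolding L_def B_def by auto
  have Lsnd: "snd u = 0" if "u \<in> set L" for u using that unfolding L_def by (simp only: set_filter) blast
  have hsum: "(\<Sum>j\<in>UNIV. x $ j *\<^sub>R eacp_h j) = (x, 0)" for x :: "real^'n"
    unfolding eacp_h_def
    by (simp add: prod_eq_iff fst_sum snd_sum vec_eq_iff sum_component axis_def if_distrib cong: if_cong)
  have img: "(\<lambda>i. \<Sum>j\<in>UNIV. \<alpha> i j *\<^sub>R eacp_h j) ` {1..m} = set L"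
  proof -
    have "(\<lambda>i. \<Sum>j\<in>UNIV. \<alpha> i j *\<^sub>R eacp_h j) ` {1..m} = (\<lambda>i. L ! (i - 1)) ` {1..m}"
    proof (rule image_cong[OF refl])
      fix i assume "i \<in> {1..m}"
      hence "L ! (i - 1) \<in> set L" unfolding m_def by auto
      hence "snd (L ! (i - 1)) = 0" by (rule Lsnd)
      thus "(\<Sum>j\<in>UNIV. \<alpha> i j *\<^sub>R eacp_h j) = L ! (i - 1)"
        unfolding \<alpha>_def hsum[of "fst (L ! (i - 1))", unfolded vec_lambda_eta]
        by (simp add: prod_eq_iff)
    qed
    also have "\<dots> = set L"
    proof
      show "(\<lambda>i. L ! (i - 1)) ` {1..m} \<subseteq> set L" unfolding m_def by auto
      show "set L \<subseteq> (\<lambda>i. L ! (i - 1)) ` {1..m}"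
      proof
        fix u assume "u \<in> set L"
        then obtain k where k: "k < length L" "u = L ! k" by (metis in_set_conv_nth)
        hence "Suc k \<in> {1..m}" "u = L ! (Suc k - 1)" unfolding m_def by auto
        thus "u \<in> (\<lambda>i. L ! (i - 1)) ` {1..m}" by blast
      qed
    qed
    finally show ?thesis .
  qed
  have spanS: "S = span (set L \<union> {a *\<^sub>R eacp_r})"
  proof -
    have "span B = span (set L \<union> {a *\<^sub>R eacp_r})"
    proof (subst span_eq, rule conjI)
      show "B \<subseteq> span (set L \<union> {a *\<^sub>R eacp_r})"
      proof
        fix u assume u: "u \<in> B"
        show "u \<in> span (set L \<union> {a *\<^sub>R eacp_r})"
        proof (cases "snd u = 0")
          case True
          hence "u \<in> set L" using u unfolding L_def B_def by auto
          thus ?thesis by (simp add: span_base)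
        next
          case False
          hence a1: "a = 1" unfolding a_def using u by auto
          have "fst u = 0" using split[OF u] False by simp
          hence "u = snd u *\<^sub>R (a *\<^sub>R eacp_r)" using a1 unfolding eacp_r_def
            by (simp add: prod_eq_iff)
          thus ?thesis by (metis span_mul span_base UnI2 singletonI)
        qed
      qed
      show "set L \<union> {a *\<^sub>R eacp_r} \<subseteq> span B"
      proof -
        have "a *\<^sub>R eacp_r \<in> span B"
        proof (cases "\<exists>u\<in>B. snd u \<noteq> 0")
          case True
          then obtain u where u: "u \<in> B" "snd u \<noteq> 0" by blast
          have "fst u = 0" using split[OF u(1)] u(2) by simp
          hence "a *\<^sub>R eacp_r = (1 / snd u) *\<^sub>R u" using True u(2) unfolding a_def eacp_r_def
            by (simp add: prod_eq_iff)
          thus ?thesis by (metis span_mul span_base u(1))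
        next
          case False thus ?thesis unfolding a_def by (simp add: span_zero)
        qed
        thus ?thesis using LB span_base by blast
      qed
    qed
    thus ?thesis using sp unfolding B_def by simp
  qed
  have mle: "m \<le> CARD('n)"
  proof -
    have indL: "independent (set L)" using ind LB unfolding B_def by (metis dependent_mono)
    have sub: "span (set L) \<subseteq> {u. snd u = 0}"
      by (rule span_minimal) (use Lsnd in \<open>force simp: subspace_def\<close>)+
    have "(0::real^'n, 1::real) \<notin> span (set L)" using sub by auto
    hence ind2: "independent (insert (0, 1) (set L))" using indL by (simp add: independent_insertI)
    have "card (insert (0::real^'n, 1::real) (set L)) \<le> DIM((real^'n) \<times> real)"
      using independent_bound[OF ind2] by simp
    moreover have "(0::real^'n, 1::real) \<notin> set L" using Lsnd by force
    moreover have "card (set L) = m" proof -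
      have "distinct L" unfolding L_def using d by (rule distinct_filter)
      thus ?thesis unfolding m_def by (rule distinct_card)
    qed
    ultimately show ?thesis by simp
  qed
  show ?thesis
    apply (rule exI[of _ m], rule exI[of _ a], rule exI[of _ \<alpha>])
    using mle spanS img unfolding a_def by auto
qed

end
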